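(* $$\sum_{n\ge0}\Bigl(\sum_{\sigma\in\mathfrak S_n}u^{2{\rm L}(\sigma)}v^{n-2{\rm L}(\sigma)}\beta^{{\rm RLmin}(\sigma)}\Bigr)\frac{t^n}{n!}=\left(\frac{\sqrt{v^2-u^2}}{\sqrt{v^2-u^2}\cosh\bigl(t\sqrt{v^2-u^2}\bigr)-v\sinh\bigl(t\sqrt{v^2-u^2}\bigr)}\right)^{\beta}.$$
   Context: For $\sigma=\sigma_1\cdots\sigma_n\in\mathfrak S_n$ ($\mathfrak S_0$ = empty permutation): ${\rm L}(\sigma)$ is the number of $i$ with $1\le i<n$ and $\sigma_{i-1}<\sigma_i>\sigma_{i+1}$ (convention $\sigma_0=0$); ${\rm RLmin}(\sigma)$ is the number of $i$ with $\sigma_j>\sigma_i$ for all $j>i$. Identity of formal power series in $t$; the base is a power series in $t$ with constant term $1$ depending only on $v^2-u^2$ and $v$, and powers are defined by $G^c=\exp(c\log G)$. *)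

theory Defs
  imports "HOL-Computational_Algebra.Formal_Power_Series" "HOL-Combinatorics.Multiset_Permutations"
begin

(* A permutation sigma = sigma_1 ... sigma_n of {1..n} is a list xs with sigma_i = xs ! (i-1). *)

definition perm_at :: "nat list \<Rightarrow> nat \<Rightarrow> nat" where
  "perm_at xs i = (if i = 0 then 0 else xs ! (i - 1))"

definition peakL :: "nat list \<Rightarrow> nat" where
  "peakL xs = card {i \<in> {1..<length xs}.
      perm_at xs (i - 1) < perm_at xs i \<and> perm_at xs i > perm_at xs (i + 1)}"

definition RLmin :: "nat list \<Rightarrow> nat" where
  "RLmin xs = card {i \<in> {1..length xs}.
      \<forall>j \<in> {i<..length xs}. perm_at xs j > perm_at xs i}"

(* formal power series in t of cosh(t w) and sinh(t w)/w, where w^2 = d (only even powers of w occur) *)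
definition cosh_fps :: "real \<Rightarrow> real fps" where
  "cosh_fps d = Abs_fps (\<lambda>n. if even n then d ^ (n div 2) / fact n else 0)"

definition sinhw_fps :: "real \<Rightarrow> real fps" where
  "sinhw_fps d = Abs_fps (\<lambda>n. if odd n then d ^ (n div 2) / fact n else 0)"

(* G^c = exp(c log G) for a series G with constant term 1 *)
definition fps_pow_real :: "real fps \<Rightarrow> real \<Rightarrow> real fps" where
  "fps_pow_real G c = fps_exp c oo (fps_ln 1 oo (G - 1))"

end

theory Submission
  imports Defs
begin
unbundle fps_syntax



lemma fps_ode_zero:
  fixes Y H :: "real fps"
  assumes "fps_deriv Y = H * Y" "Y $ 0 = 0"
  shows "Y = 0"
proof -
  have "\<forall>m\<le>n. Y $ m = 0" for n
  proof (induction n)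
    case 0 then show ?case using assms(2) by simp
  next
    case (Suc n)
    have "(H * Y) $ n = 0" using Suc by (simp add: fps_mult_nth)
    then have "of_nat (n+1) * Y $ (n+1) = 0" using assms(1)
      by (metis fps_deriv_nth)
    then have "Y $ Suc n = 0" by simp
    then show ?case using Suc by (metis le_Suc_eq)
  qed
  then show ?thesis by (intro fps_ext) auto
qed

lemma cosh_deriv: "fps_deriv (cosh_fps d) = fps_const d * sinhw_fps d"
proof (rule fps_ext)
  fix n
  show "fps_deriv (cosh_fps d) $ n = (fps_const d * sinhw_fps d) $ n"
  proof (cases "even n")
    case True then show ?thesis by (simp add: cosh_fps_def sinhw_fps_def)
  next
    case False
    then have "Suc n div 2 = Suc (n div 2)" by presburger
    then show ?thesis using False
      by (simp add: cosh_fps_def sinhw_fps_def fact_Suc field_simps del: of_nat_Suc)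
  qed
qed

lemma sinhw_deriv: "fps_deriv (sinhw_fps d) = cosh_fps d"
proof (rule fps_ext)
  fix n
  show "fps_deriv (sinhw_fps d) $ n = cosh_fps d $ n"
  proof (cases "even n")
    case True
    then have "Suc n div 2 = n div 2" by presburger
    then show ?thesis using True
      by (simp add: cosh_fps_def sinhw_fps_def fact_Suc field_simps del: of_nat_Suc)
  next
    case False then show ?thesis by (simp add: cosh_fps_def sinhw_fps_def)
  qed
qed




lemma main_fps:
  fixes Xf Af :: "real fps" and d v \<beta> :: real
  defines "D \<equiv> cosh_fps d - fps_const v * sinhw_fps d"
  assumes X1: "fps_deriv Xf = Xf * Xf - fps_const d" and X0: "Xf $ 0 = v"
  assumes A1: "fps_deriv Af = fps_const \<beta> * Xf * Af" and A0: "Af $ 0 = 1"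
  shows "Af = fps_pow_real (inverse D) \<beta>"
proof -
  have D0: "D $ 0 = 1" by (simp add: D_def cosh_fps_def sinhw_fps_def)
  have D1: "fps_deriv D = fps_const d * sinhw_fps d - fps_const v * cosh_fps d"
    unfolding D_def by (simp only: fps_deriv_sub fps_deriv_mult_const_left cosh_deriv sinhw_deriv)
  have D2: "fps_deriv (fps_deriv D) = fps_const d * D"
  proof -
    have "fps_deriv (fps_deriv D) = fps_const d * cosh_fps d - fps_const v * (fps_const d * sinhw_fps d)"
      unfolding D1 by (simp only: fps_deriv_sub fps_deriv_mult_const_left cosh_deriv sinhw_deriv)
    also have "\<dots> = fps_const d * D" unfolding D_def
      by (simp only: right_diff_distrib mult.left_commute)
    finally show ?thesis .
  qed
  have D10: "D $ Suc 0 = - v"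
    unfolding D_def by (simp add: cosh_fps_def sinhw_fps_def)
  define Y where "Y = Xf * D + fps_deriv D"
  have "fps_deriv Y = Xf * Y"
  proof -
    have "fps_deriv Y = fps_deriv Xf * D + Xf * fps_deriv D + fps_deriv (fps_deriv D)"
      unfolding Y_def by (simp only: fps_deriv_add fps_deriv_mult add.commute)
    also have "\<dots> = (Xf * Xf - fps_const d) * D + Xf * fps_deriv D + fps_const d * D"
      by (simp only: X1 D2)
    also have "\<dots> = Xf * Y" unfolding Y_def by (simp add: ring_distribs)
    finally show ?thesis .
  qed
  moreover have "Y $ 0 = 0"
    unfolding Y_def by (simp add: fps_mult_nth X0 D0 D10)
  ultimately have "Y = 0" by (rule fps_ode_zero)
  then have XD: "Xf * D = - fps_deriv D" unfolding Y_def by (simp add: eq_neg_iff_add_eq_0)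
  define G where "G = inverse D"
  have GD: "G * D = 1" unfolding G_def by (rule inverse_mult_eq_1) (simp add: D0)
  have G0: "G $ 0 = 1" unfolding G_def using D0 by simp
  have XG: "Xf = - fps_deriv D * G"
  proof -
    have "Xf = Xf * (D * G)" using GD by (simp add: mult.commute)
    also have "\<dots> = (Xf * D) * G" by (simp only: mult.assoc)
    finally show ?thesis using XD by simp
  qed
  have dGD: "fps_deriv G * D = - G * fps_deriv D"
  proof -
    have "fps_deriv (G * D) = 0" using GD by simp
    then have "fps_deriv G * D + G * fps_deriv D = 0" by (simp only: fps_deriv_mult add.commute)
    then show ?thesis by (simp add: eq_neg_iff_add_eq_0)
  qed
  define L where "L = fps_ln 1 oo (G - 1)"
  have g0: "(G - 1) $ 0 = 0" using G0 by simp
  have inv1: "inverse (1 + fps_X) * (1 + fps_X) = (1::real fps)"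
    by (rule inverse_mult_eq_1) simp
  have IG: "(inverse (1 + fps_X) oo (G - 1)) * G = 1"
  proof -
    have "(inverse (1 + fps_X) oo (G - 1)) * ((1 + fps_X) oo (G - 1)) = 1"
      using arg_cong[OF inv1, of "\<lambda>z. z oo (G - 1)"]
      by (simp add: fps_compose_mult_distrib[OF g0])
    moreover have "(1 + fps_X) oo (G - 1) = G"
      by (simp add: fps_compose_add_distrib fps_X_fps_compose_startby0[OF g0])
    ultimately show ?thesis by simp
  qed
  have dL: "fps_deriv L = (inverse (1 + fps_X) oo (G - 1)) * fps_deriv G"
    unfolding L_def by (simp add: fps_compose_deriv[OF g0] fps_ln_deriv)
  have LG: "fps_deriv L * G = fps_deriv G"
  proof -
    have "fps_deriv L * G = ((inverse (1 + fps_X) oo (G - 1)) * G) * fps_deriv G"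
      unfolding dL by (simp only: mult_ac)
    then show ?thesis using IG by simp
  qed
  have LX: "fps_deriv L = Xf"
  proof -
    have "fps_deriv L = fps_deriv L * (G * D)" using GD by simp
    also have "\<dots> = (fps_deriv L * G) * D" by (simp only: mult.assoc)
    also have "\<dots> = fps_deriv G * D" using LG by simp
    also have "\<dots> = - G * fps_deriv D" by (rule dGD)
    also have "\<dots> = - fps_deriv D * G" by (metis mult.commute mult_minus_left)
    also have "\<dots> = Xf" using XG by simp
    finally show ?thesis .
  qed
  have L0: "L $ 0 = 0" unfolding L_def by simp
  define P where "P = fps_exp \<beta> oo L"
  have P1: "fps_deriv P = fps_const \<beta> * Xf * P"
  proof -
    have "fps_deriv P = (fps_deriv (fps_exp \<beta>) oo L) * fps_deriv L"
      unfolding P_def by (rule fps_compose_deriv[OF L0])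
    also have "\<dots> = (fps_const \<beta> * fps_exp \<beta> oo L) * Xf" by (simp only: LX fps_exp_deriv)
    also have "\<dots> = fps_const \<beta> * P * Xf"
      by (simp add: fps_compose_mult_distrib[OF L0] P_def)
    finally show ?thesis by (simp only: mult_ac)
  qed
  have P0: "P $ 0 = 1" unfolding P_def by simp
  have "fps_deriv (Af - P) = (fps_const \<beta> * Xf) * (Af - P)"
    by (simp only: fps_deriv_sub A1 P1 right_diff_distrib)
  moreover have "(Af - P) $ 0 = 0" using A0 P0 by simp
  ultimately have "Af - P = 0" by (rule fps_ode_zero)
  then show ?thesis by (simp add: P_def L_def G_def fps_pow_real_def)
qed



fun pkL :: "nat \<Rightarrow> nat list \<Rightarrow> nat" where
  "pkL a [] = 0"
| "pkL a [x] = 0"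
| "pkL a (x # y # ys) = (if a < x \<and> y < x then 1 else 0) + pkL x (y # ys)"

fun pk :: "nat \<Rightarrow> nat list \<Rightarrow> nat \<Rightarrow> nat" where
  "pk a [] b = 0"
| "pk a [x] b = (if a < x \<and> b < x then 1 else 0)"
| "pk a (x # y # ys) b = (if a < x \<and> y < x then 1 else 0) + pk x (y # ys) b"

fun rl :: "nat list \<Rightarrow> nat" where
  "rl [] = 0"
| "rl (x # xs) = (if \<forall>y\<in>set xs. x < y then 1 else 0) + rl xs"

lemma pkL_Cons: "pkL a (x # xs) = (if xs \<noteq> [] \<and> a < x \<and> hd xs < x then 1 else 0) + pkL x xs"
  by (cases xs) auto

lemma pk_Cons: "pk a (x # xs) b = (if a < x \<and> hd (xs @ [b]) < x then 1 else 0) + pk x xs b"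
  by (cases xs) auto

declare pkL.simps(2,3)[simp del] pk.simps(2,3)[simp del]

lemma pkL_append: "pkL a (xs @ y # ys) = pk a xs y + pkL (last (a # xs)) (y # ys)"
proof (induction xs arbitrary: a)
  case Nil then show ?case by simp
next
  case (Cons x xs)
  show ?case
    by (simp add: pkL_Cons pk_Cons Cons.IH) (cases xs; simp)
qed

lemma pk_append: "pk a (xs @ y # ys) b = pk a xs y
   + (if last (a # xs) < y \<and> hd (ys @ [b]) < y then 1 else 0) + pk y ys b"
proof (induction xs arbitrary: a)
  case Nil then show ?case by (simp add: pk_Cons)
next
  case (Cons x xs)
  show ?case
    by (simp add: pk_Cons Cons.IH) (cases xs; simp)
qed

lemma pk_padL: "(xs \<noteq> [] \<Longrightarrow> a < hd xs \<and> a' < hd xs) \<Longrightarrow> pk a xs b = pk a' xs b"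
  by (cases xs) (auto simp: pk_Cons)

lemma pkL_padL: "(xs \<noteq> [] \<Longrightarrow> a < hd xs \<and> a' < hd xs) \<Longrightarrow> pkL a xs = pkL a' xs"
  by (cases xs) (auto simp: pkL_Cons)

lemma pk_padR: "\<forall>z\<in>set xs. b < z \<and> b' < z \<Longrightarrow> pk a xs b = pk a xs b'"
proof (induction xs arbitrary: a)
  case Nil then show ?case by simp
next
  case (Cons x xs)
  then show ?case by (cases xs) (auto simp: pk_Cons)
qed

lemma pk_bound: "2 * pk a xs b \<le> length xs + (if xs \<noteq> [] \<and> a < hd xs then 1 else 0)"
proof (induction xs arbitrary: a)
  case Nil then show ?case by simp
next
  case (Cons x xs)
  have IH: "2 * pk x xs b \<le> length xs + (if xs \<noteq> [] \<and> x < hd xs then 1 else 0)" by (rule Cons.IH)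
  show ?case using IH by (cases xs) (auto simp: pk_Cons split: if_splits)
qed

lemma pkL_bound: "2 * pkL a xs + (if xs \<noteq> [] \<and> \<not> a < hd xs then 1 else 0) \<le> length xs"
proof (induction xs arbitrary: a)
  case Nil then show ?case by simp
next
  case (Cons x xs)
  have IH: "2 * pkL x xs + (if xs \<noteq> [] \<and> \<not> x < hd xs then 1 else 0) \<le> length xs" by (rule Cons.IH)
  show ?case using IH by (cases xs) (auto simp: pkL_Cons split: if_splits)
qed

lemma pk_bound': "2 * pk a xs b \<le> Suc (length xs)"
  using pk_bound[of a xs b] by (auto split: if_splits)

lemma pkL_bound': "2 * pkL a xs \<le> length xs"
  using pkL_bound[of a xs] by (auto split: if_splits)

lemma rl_append: "\<forall>z\<in>set xs. m < z \<Longrightarrow> \<forall>z\<in>set ys. m < z \<Longrightarrow> rl (xs @ m # ys) = Suc (rl ys)"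
proof (induction xs)
  case Nil then show ?case by simp
next
  case (Cons x xs)
  then show ?case by auto
qed

lemma pkL_split:
  assumes "\<forall>z\<in>set xs. m < z" "\<forall>z\<in>set ys. m < z"
  shows "pkL 0 (xs @ m # ys) = pk 0 xs 0 + pkL 0 ys"
proof -
  have "pkL 0 (xs @ m # ys) = pk 0 xs m + pkL (last (0 # xs)) (m # ys)" by (rule pkL_append)
  also have "pkL (last (0 # xs)) (m # ys) = pkL m ys"
    using assms(2) by (cases ys) (auto simp: pkL_Cons)
  also have "pkL m ys = pkL 0 ys"
    using assms(2) hd_in_set by (intro pkL_padL) fastforce
  also have "pk 0 xs m = pk 0 xs 0"
    using assms(1) by (intro pk_padR) auto
  finally show ?thesis .
qed

lemma pk_split:
  assumes "\<forall>z\<in>set xs. m < z" "\<forall>z\<in>set ys. m < z" "xs \<noteq> [] \<or> ys \<noteq> []"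
  shows "pk 0 (xs @ m # ys) 0 = pk 0 xs 0 + pk 0 ys 0"
proof -
  have "pk 0 (xs @ m # ys) 0 = pk 0 xs m
   + (if last (0 # xs) < m \<and> hd (ys @ [0]) < m then 1 else 0) + pk m ys 0" by (rule pk_append)
  also have "(if last (0 # xs) < m \<and> hd (ys @ [0]) < m then 1 else 0) = (0::nat)"
  proof (cases "xs = []")
    case True
    then have "ys \<noteq> []" using assms(3) by simp
    then show ?thesis using assms(2) by (cases ys) auto
  next
    case False
    then have "last xs \<in> set xs" by simp
    then have "m < last xs" using assms(1) by blast
    then show ?thesis using False by simp
  qed
  also have "pk m ys 0 = pk 0 ys 0"
    using assms(2) hd_in_set by (intro pk_padL) fastforce
  also have "pk 0 xs m = pk 0 xs 0"
    using assms(1) by (intro pk_padR) auto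
  finally show ?thesis by simp
qed




definition pa :: "nat \<Rightarrow> nat list \<Rightarrow> nat \<Rightarrow> nat" where
  "pa a xs i = (if i = 0 then a else xs ! (i - 1))"

definition pkp :: "nat \<Rightarrow> nat list \<Rightarrow> nat \<Rightarrow> bool" where
  "pkp a xs i = (pa a xs (i - 1) < pa a xs i \<and> pa a xs (i + 1) < pa a xs i)"

lemma pa_Cons: "pa a (x # xs) (Suc j) = pa x xs j"
  by (cases j) (auto simp: pa_def)

lemma pkp_Cons: "i \<ge> 1 \<Longrightarrow> pkp a (x # xs) (Suc i) = pkp x xs i"
  by (cases i) (auto simp: pkp_def pa_Cons)

lemma pkp_1: "xs \<noteq> [] \<Longrightarrow> pkp a (x # xs) (Suc 0) = (a < x \<and> hd xs < x)"
  by (cases xs) (auto simp: pkp_def pa_def)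

lemma card_filter_sum: "finite A \<Longrightarrow> card {i \<in> A. P i} = (\<Sum>i\<in>A. if P i then 1 else 0)"
  by (simp add: sum.inter_filter[symmetric])

lemma pkL_card: "pkL a xs = card {i \<in> {1..<length xs}. pkp a xs i}"
proof (induction xs arbitrary: a)
  case Nil then show ?case by simp
next
  case (Cons x xs)
  show ?case
  proof (cases "xs = []")
    case True then show ?thesis by (simp add: pkL_Cons)
  next
    case False
    define n where "n = length xs"
    have n: "1 < Suc n" using False by (simp add: n_def)
    have "card {i \<in> {1..<length (x # xs)}. pkp a (x # xs) i}
      = (\<Sum>i\<in>{1..<Suc n}. if pkp a (x # xs) i then 1 else 0)"
      by (simp only: n_def length_Cons card_filter_sum finite_atLeastLessThan)
    also have "\<dots> = (if pkp a (x # xs) 1 then 1 else 0) +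
       (\<Sum>i\<in>{Suc 1..<Suc n}. if pkp a (x # xs) i then 1 else 0)"
      by (rule sum.atLeast_Suc_lessThan[OF n])
    also have "(\<Sum>i\<in>{Suc 1..<Suc n}. if pkp a (x # xs) i then 1 else 0)
       = (\<Sum>i\<in>{1..<n}. if pkp x xs i then 1 else (0::nat))"
      by (subst sum.shift_bounds_Suc_ivl) (intro sum.cong refl, simp add: pkp_Cons)
    also have "\<dots> = card {i \<in> {1..<length xs}. pkp x xs i}"
      by (simp only: n_def card_filter_sum finite_atLeastLessThan)
    also have "\<dots> = pkL x xs" by (rule Cons.IH[symmetric])
    finally show ?thesis using False by (simp add: pkL_Cons pkp_1)
  qed
qed

lemma peakL_eq: "peakL xs = pkL 0 xs"
proof -
  have "perm_at xs = pa 0 xs" by (auto simp: perm_at_def pa_def fun_eq_iff)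
  then show ?thesis by (simp add: peakL_def pkL_card pkp_def)
qed

definition rlp :: "nat list \<Rightarrow> nat \<Rightarrow> bool" where
  "rlp xs i = (\<forall>j\<in>{i<..length xs}. xs ! (j - 1) > xs ! (i - 1))"

lemma rlp_Cons: "i \<ge> 1 \<Longrightarrow> rlp (x # xs) (Suc i) = rlp xs i"
proof -
  assume i: "i \<ge> 1"
  have "(\<forall>j\<in>{Suc i<..Suc (length xs)}. (x # xs) ! (j - 1) > (x # xs) ! (Suc i - 1))
     = (\<forall>j\<in>{i<..length xs}. xs ! (j - 1) > xs ! (i - 1))"
  proof
    assume H: "\<forall>j\<in>{Suc i<..Suc (length xs)}. (x # xs) ! (j - 1) > (x # xs) ! (Suc i - 1)"
    show "\<forall>j\<in>{i<..length xs}. xs ! (j - 1) > xs ! (i - 1)"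
    proof
      fix j assume j: "j \<in> {i<..length xs}"
      then have "Suc j \<in> {Suc i<..Suc (length xs)}" by simp
      from H[rule_format, OF this] show "xs ! (j - 1) > xs ! (i - 1)"
        using i j by (auto simp: nth_Cons')
    qed
  next
    assume H: "\<forall>j\<in>{i<..length xs}. xs ! (j - 1) > xs ! (i - 1)"
    show "\<forall>j\<in>{Suc i<..Suc (length xs)}. (x # xs) ! (j - 1) > (x # xs) ! (Suc i - 1)"
    proof
      fix j assume j: "j \<in> {Suc i<..Suc (length xs)}"
      then obtain k where k: "j = Suc k" "k \<in> {i<..length xs}" by (cases j) auto
      from H[rule_format, OF k(2)] show "(x # xs) ! (j - 1) > (x # xs) ! (Suc i - 1)"
        using i k by (auto simp: nth_Cons')
    qed
  qed
  then show ?thesis by (simp add: rlp_def)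
qed

lemma rlp_1: "rlp (x # xs) (Suc 0) = (\<forall>y\<in>set xs. x < y)"
proof
  assume H: "rlp (x # xs) (Suc 0)"
  show "\<forall>y\<in>set xs. x < y"
  proof
    fix y assume "y \<in> set xs"
    then obtain k where k: "k < length xs" "xs ! k = y" by (auto simp: in_set_conv_nth)
    then have "Suc (Suc k) \<in> {Suc 0<..length (x # xs)}" by simp
    from H[unfolded rlp_def, rule_format, OF this] show "x < y" using k by simp
  qed
next
  assume H: "\<forall>y\<in>set xs. x < y"
  show "rlp (x # xs) (Suc 0)" unfolding rlp_def
  proof
    fix j assume j: "j \<in> {Suc 0<..length (x # xs)}"
    then obtain k where k: "j = Suc (Suc k)" "k < length xs"
      by (cases j; cases "j - 1") auto
    then show "(x # xs) ! (j - 1) > (x # xs) ! (Suc 0 - 1)" using H by simp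
  qed
qed

lemma rl_card: "rl xs = card {i \<in> {1..length xs}. rlp xs i}"
proof (induction xs)
  case Nil then show ?case by simp
next
  case (Cons x xs)
  define n where "n = length xs"
  have "card {i \<in> {1..length (x # xs)}. rlp (x # xs) i}
    = (\<Sum>i\<in>{1..Suc n}. if rlp (x # xs) i then 1 else 0)"
    by (simp only: n_def length_Cons card_filter_sum finite_atLeastAtMost)
  also have "\<dots> = (if rlp (x # xs) 1 then 1 else 0) + (\<Sum>i\<in>{Suc 1..Suc n}. if rlp (x # xs) i then 1 else 0)"
    by (rule sum.atLeast_Suc_atMost) simp
  also have "(\<Sum>i\<in>{Suc 1..Suc n}. if rlp (x # xs) i then 1 else 0)
       = (\<Sum>i\<in>{1..n}. if rlp xs i then 1 else (0::nat))"
    by (subst sum.shift_bounds_cl_Suc_ivl) (intro sum.cong refl, simp add: rlp_Cons)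
  also have "\<dots> = card {i \<in> {1..length xs}. rlp xs i}"
    by (simp only: n_def card_filter_sum finite_atLeastAtMost)
  finally show ?case using Cons.IH by (simp add: rlp_1)
qed

lemma RLmin_eq: "RLmin xs = rl xs"
proof -
  have "{i \<in> {1..length xs}. \<forall>j \<in> {i<..length xs}. perm_at xs j > perm_at xs i}
     = {i \<in> {1..length xs}. rlp xs i}"
    by (auto simp: perm_at_def rlp_def)
  then show ?thesis by (simp add: RLmin_def rl_card)
qed




lemma perms_decomp:
  fixes f :: "nat list \<Rightarrow> 'b::comm_monoid_add"
  assumes S: "finite S" "m \<in> S"
  shows "(\<Sum>\<sigma>\<in>permutations_of_set S. f \<sigma>)
    = (\<Sum>T\<in>Pow (S - {m}). \<Sum>\<alpha>\<in>permutations_of_set T. \<Sum>\<gamma>\<in>permutations_of_set (S - {m} - T). f (\<alpha> @ m # \<gamma>))"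
proof -
  define R where "R = S - {m}"
  define Sig where "Sig = (SIGMA T:Pow R. permutations_of_set T \<times> permutations_of_set (R - T))"
  define h where "h = (\<lambda>p::nat set \<times> nat list \<times> nat list. fst (snd p) @ m # snd (snd p))"
  define P where "P = (\<lambda>x::nat. x \<noteq> m)"
  define i where "i = (\<lambda>\<sigma>. (set (takeWhile P \<sigma>), takeWhile P \<sigma>, tl (dropWhile P \<sigma>)))"
  have finR: "finite R" using S by (simp add: R_def)
  have mR: "m \<notin> R" by (simp add: R_def)
  have "(\<Sum>T\<in>Pow R. \<Sum>\<alpha>\<in>permutations_of_set T. \<Sum>\<gamma>\<in>permutations_of_set (R - T). f (\<alpha> @ m # \<gamma>))
      = (\<Sum>T\<in>Pow R. \<Sum>p\<in>permutations_of_set T \<times> permutations_of_set (R - T). f (fst p @ m # snd p))"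
    by (intro sum.cong refl) (simp add: sum.cartesian_product split_beta)
  also have "\<dots> = (\<Sum>q\<in>Sig. f (h q))"
    unfolding Sig_def h_def using finR
    by (subst sum.Sigma) (auto simp: finite_subset split_beta)
  also have "\<dots> = (\<Sum>\<sigma>\<in>permutations_of_set S. f \<sigma>)"
  proof (rule sum.reindex_bij_witness[where i = i and j = h])
    fix q assume q: "q \<in> Sig"
    then obtain T \<alpha> \<gamma> where qq: "q = (T, \<alpha>, \<gamma>)" "T \<subseteq> R" "\<alpha> \<in> permutations_of_set T"
      "\<gamma> \<in> permutations_of_set (R - T)" unfolding Sig_def by auto
    have "m \<notin> set \<alpha>" using qq mR by (auto simp: permutations_of_set_def)
    then have tw: "takeWhile P (\<alpha> @ m # \<gamma>) = \<alpha>" "dropWhile P (\<alpha> @ m # \<gamma>) = m # \<gamma>"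
      unfolding P_def by (induction \<alpha>) auto
    show "i (h q) = q" using tw qq by (auto simp: i_def h_def permutations_of_set_def)
    show "h q \<in> permutations_of_set S"
      using qq mR \<open>m \<notin> set \<alpha>\<close> S by (auto simp: h_def permutations_of_set_def R_def)
  next
    fix \<sigma> assume \<sigma>: "\<sigma> \<in> permutations_of_set S"
    then have ms: "m \<in> set \<sigma>" and ds: "distinct \<sigma>" and ss: "set \<sigma> = S"
      using S by (auto simp: permutations_of_set_def)
    define \<alpha> where "\<alpha> = takeWhile P \<sigma>"
    define \<gamma> where "\<gamma> = tl (dropWhile P \<sigma>)"
    have dne: "dropWhile P \<sigma> \<noteq> []" using ms by (auto simp: P_def dropWhile_eq_Nil_conv)
    have hdd: "hd (dropWhile P \<sigma>) = m" using dne hd_dropWhile[OF dne] by (simp add: P_def)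
    have dec: "\<sigma> = \<alpha> @ m # \<gamma>"
      using takeWhile_dropWhile_id[of P \<sigma>] dne hdd unfolding \<alpha>_def \<gamma>_def
      by (metis list.collapse)
    show "h (i \<sigma>) = \<sigma>" using dec by (simp add: h_def i_def \<alpha>_def \<gamma>_def)
    have d2: "distinct (\<alpha> @ m # \<gamma>)" using ds dec by simp
    have s2: "set \<alpha> \<union> {m} \<union> set \<gamma> = S" using ss dec by auto
    show "i \<sigma> \<in> Sig"
      unfolding i_def Sig_def using d2 s2
      by (auto simp: permutations_of_set_def R_def \<alpha>_def[symmetric] \<gamma>_def[symmetric])
  qed (simp)
  finally show ?thesis by (simp add: R_def)
qed




definition xw :: "real \<Rightarrow> real \<Rightarrow> nat list \<Rightarrow> real" where
  "xw u v \<alpha> = u ^ (2 * pk 0 \<alpha> 0) * v ^ (Suc (length \<alpha>) - 2 * pk 0 \<alpha> 0)"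

definition aw :: "real \<Rightarrow> real \<Rightarrow> real \<Rightarrow> nat list \<Rightarrow> real" where
  "aw u v \<beta> \<sigma> = u ^ (2 * pkL 0 \<sigma>) * v ^ (length \<sigma> - 2 * pkL 0 \<sigma>) * \<beta> ^ rl \<sigma>"

definition Xs :: "real \<Rightarrow> real \<Rightarrow> nat set \<Rightarrow> real" where
  "Xs u v S = (\<Sum>\<alpha>\<in>permutations_of_set S. xw u v \<alpha>)"

definition As :: "real \<Rightarrow> real \<Rightarrow> real \<Rightarrow> nat set \<Rightarrow> real" where
  "As u v \<beta> S = (\<Sum>\<sigma>\<in>permutations_of_set S. aw u v \<beta> \<sigma>)"

lemma aw_split:
  assumes "\<forall>z\<in>set \<alpha>. m < z" "\<forall>z\<in>set \<gamma>. m < z"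
  shows "aw u v \<beta> (\<alpha> @ m # \<gamma>) = \<beta> * xw u v \<alpha> * aw u v \<beta> \<gamma>"
proof -
  define p where "p = pk 0 \<alpha> 0"
  define q where "q = pkL 0 \<gamma>"
  have b1: "2 * p \<le> Suc (length \<alpha>)" unfolding p_def by (rule pk_bound')
  have b2: "2 * q \<le> length \<gamma>" unfolding q_def by (rule pkL_bound')
  have e1: "pkL 0 (\<alpha> @ m # \<gamma>) = p + q" unfolding p_def q_def by (rule pkL_split[OF assms])
  have e2: "rl (\<alpha> @ m # \<gamma>) = Suc (rl \<gamma>)" by (rule rl_append[OF assms])
  have e3: "length (\<alpha> @ m # \<gamma>) - 2 * (p + q) = (Suc (length \<alpha>) - 2 * p) + (length \<gamma> - 2 * q)"
    using b1 b2 by simp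
  show ?thesis
    unfolding aw_def xw_def e1 e2 e3 p_def[symmetric] q_def[symmetric]
    by (simp add: power_add algebra_simps)
qed

lemma xw_split:
  assumes "\<forall>z\<in>set \<alpha>. m < z" "\<forall>z\<in>set \<gamma>. m < z" "\<alpha> \<noteq> [] \<or> \<gamma> \<noteq> []"
  shows "xw u v (\<alpha> @ m # \<gamma>) = xw u v \<alpha> * xw u v \<gamma>"
proof -
  define p where "p = pk 0 \<alpha> 0"
  define q where "q = pk 0 \<gamma> 0"
  have b1: "2 * p \<le> Suc (length \<alpha>)" unfolding p_def by (rule pk_bound')
  have b2: "2 * q \<le> Suc (length \<gamma>)" unfolding q_def by (rule pk_bound')
  have e1: "pk 0 (\<alpha> @ m # \<gamma>) 0 = p + q" unfolding p_def q_def by (rule pk_split[OF assms])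
  have e3: "Suc (length (\<alpha> @ m # \<gamma>)) - 2 * (p + q) = (Suc (length \<alpha>) - 2 * p) + (Suc (length \<gamma>) - 2 * q)"
    using b1 b2 by simp
  show ?thesis
    unfolding xw_def e1 e3 p_def[symmetric] q_def[symmetric]
    by (simp add: power_add algebra_simps)
qed

lemma perm_mem_less:
  fixes m :: nat
  assumes "T \<subseteq> S - {m}" "\<forall>z\<in>S. m \<le> z" "\<alpha> \<in> permutations_of_set T"
  shows "\<forall>z\<in>set \<alpha>. m < z"
proof
  fix z assume "z \<in> set \<alpha>"
  then have "z \<in> T" using assms(3) by (simp add: permutations_of_set_def)
  then have "z \<in> S" "z \<noteq> m" using assms(1) by auto
  then show "m < z" using assms(2) by force
qed

lemma X_rec:
  assumes S: "finite S" "m \<in> S" "\<forall>z\<in>S. m \<le> z" "S - {m} \<noteq> {}"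
  shows "Xs u v S = (\<Sum>T\<in>Pow (S - {m}). Xs u v T * Xs u v (S - {m} - T))"
proof -
  have "Xs u v S = (\<Sum>T\<in>Pow (S - {m}). \<Sum>\<alpha>\<in>permutations_of_set T.
          \<Sum>\<gamma>\<in>permutations_of_set (S - {m} - T). xw u v (\<alpha> @ m # \<gamma>))"
    unfolding Xs_def by (rule perms_decomp[OF S(1,2)])
  also have "\<dots> = (\<Sum>T\<in>Pow (S - {m}). \<Sum>\<alpha>\<in>permutations_of_set T.
          \<Sum>\<gamma>\<in>permutations_of_set (S - {m} - T). xw u v \<alpha> * xw u v \<gamma>)"
  proof (intro sum.cong refl)
    fix T \<alpha> \<gamma> assume T: "T \<in> Pow (S - {m})" and a: "\<alpha> \<in> permutations_of_set T"
      and g: "\<gamma> \<in> permutations_of_set (S - {m} - T)"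
    have ne: "\<alpha> \<noteq> [] \<or> \<gamma> \<noteq> []"
    proof (rule ccontr)
      assume "\<not> (\<alpha> \<noteq> [] \<or> \<gamma> \<noteq> [])"
      then have "T = {}" "S - {m} - T = {}" using a g by (auto simp: permutations_of_set_def)
      then show False using S(4) by auto
    qed
    show "xw u v (\<alpha> @ m # \<gamma>) = xw u v \<alpha> * xw u v \<gamma>"
      by (rule xw_split[OF perm_mem_less[OF _ S(3) a] perm_mem_less[OF _ S(3) g] ne]) (use T in auto)
  qed
  also have "\<dots> = (\<Sum>T\<in>Pow (S - {m}). Xs u v T * Xs u v (S - {m} - T))"
    by (simp add: Xs_def sum_product)
  finally show ?thesis .
qed

lemma A_rec:
  assumes S: "finite S" "m \<in> S" "\<forall>z\<in>S. m \<le> z"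
  shows "As u v \<beta> S = \<beta> * (\<Sum>T\<in>Pow (S - {m}). Xs u v T * As u v \<beta> (S - {m} - T))"
proof -
  have "As u v \<beta> S = (\<Sum>T\<in>Pow (S - {m}). \<Sum>\<alpha>\<in>permutations_of_set T.
          \<Sum>\<gamma>\<in>permutations_of_set (S - {m} - T). aw u v \<beta> (\<alpha> @ m # \<gamma>))"
    unfolding As_def by (rule perms_decomp[OF S(1,2)])
  also have "\<dots> = (\<Sum>T\<in>Pow (S - {m}). \<Sum>\<alpha>\<in>permutations_of_set T.
          \<Sum>\<gamma>\<in>permutations_of_set (S - {m} - T). \<beta> * (xw u v \<alpha> * aw u v \<beta> \<gamma>))"
  proof (intro sum.cong refl)
    fix T \<alpha> \<gamma> assume T: "T \<in> Pow (S - {m})" and a: "\<alpha> \<in> permutations_of_set T"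
      and g: "\<gamma> \<in> permutations_of_set (S - {m} - T)"
    have "aw u v \<beta> (\<alpha> @ m # \<gamma>) = \<beta> * xw u v \<alpha> * aw u v \<beta> \<gamma>"
      by (rule aw_split[OF perm_mem_less[OF _ S(3) a] perm_mem_less[OF _ S(3) g]]) (use T in auto)
    then show "aw u v \<beta> (\<alpha> @ m # \<gamma>) = \<beta> * (xw u v \<alpha> * aw u v \<beta> \<gamma>)" by simp
  qed
  also have "\<dots> = (\<Sum>T\<in>Pow (S - {m}). \<beta> * (Xs u v T * As u v \<beta> (S - {m} - T)))"
    unfolding Xs_def As_def sum_product by (simp only: sum_distrib_left)
  also have "\<dots> = \<beta> * (\<Sum>T\<in>Pow (S - {m}). Xs u v T * As u v \<beta> (S - {m} - T))"
    by (simp only: sum_distrib_left)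
  finally show ?thesis .
qed

lemma X_empty: "Xs u v {} = v"
  by (simp add: Xs_def xw_def)

lemma A_empty: "As u v \<beta> {} = 1"
  by (simp add: As_def aw_def)

lemma X_single: "a > 0 \<Longrightarrow> Xs u v {a} = u ^ 2"
  by (simp add: Xs_def xw_def pk.simps)

lemma sum_Pow_card:
  assumes "finite R"
  shows "(\<Sum>T\<in>Pow R. g (card T)) = (\<Sum>j\<le>card R. of_nat (card R choose j) * (g j :: real))"
proof -
  have "(\<Sum>T\<in>Pow R. g (card T)) = (\<Sum>j\<in>{..card R}. \<Sum>T\<in>{T. T \<in> Pow R \<and> card T = j}. g (card T))"
    using assms by (intro sum.group[symmetric]) (auto intro: card_mono)
  also have "\<dots> = (\<Sum>j\<in>{..card R}. \<Sum>T\<in>{T. T \<in> Pow R \<and> card T = j}. g j)"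
    by (intro sum.cong refl) auto
  also have "\<dots> = (\<Sum>j\<le>card R. of_nat (card R choose j) * g j)"
  proof (intro sum.cong refl)
    fix j
    have "card {T. T \<in> Pow R \<and> card T = j} = card R choose j"
      using n_subsets[OF assms, of j] by simp
    then show "(\<Sum>T\<in>{T. T \<in> Pow R \<and> card T = j}. g j) = of_nat (card R choose j) * g j" by simp
  qed
  finally show ?thesis .
qed

lemma sum_Pow_card2:
  assumes "finite R"
  shows "(\<Sum>T\<in>Pow R. F (card T) (card (R - T))) = (\<Sum>j\<le>card R. of_nat (card R choose j) * (F j (card R - j) :: real))"
proof -
  have "(\<Sum>T\<in>Pow R. F (card T) (card (R - T))) = (\<Sum>T\<in>Pow R. F (card T) (card R - card T))"
    using assms by (intro sum.cong refl) (auto simp: card_Diff_subset finite_subset)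
  also have "\<dots> = (\<Sum>j\<le>card R. of_nat (card R choose j) * (F j (card R - j)))"
    by (rule sum_Pow_card[OF assms])
  finally show ?thesis .
qed




definition Xc :: "real \<Rightarrow> real \<Rightarrow> nat \<Rightarrow> real" where "Xc u v k = Xs u v {1..k}"
definition Ac :: "real \<Rightarrow> real \<Rightarrow> real \<Rightarrow> nat \<Rightarrow> real" where "Ac u v \<beta> k = As u v \<beta> {1..k}"

lemma min_facts:
  fixes S :: "nat set"
  assumes "finite S" "card S \<ge> 2"
  shows "Min S \<in> S" "\<forall>z\<in>S. Min S \<le> z" "S - {Min S} \<noteq> {}" "card (S - {Min S}) = card S - 1"
    "finite (S - {Min S})"
proof -
  have ne: "S \<noteq> {}" using assms(2) by (intro notI) simp
  show m: "Min S \<in> S" using assms ne by simp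
  show "\<forall>z\<in>S. Min S \<le> z" using assms by simp
  show c: "card (S - {Min S}) = card S - 1" using m assms by simp
  show "S - {Min S} \<noteq> {}"
  proof
    assume "S - {Min S} = {}"
    then have "card (S - {Min S}) = 0" by (simp only: card.empty)
    then show False using c assms(2) by simp
  qed
  show "finite (S - {Min S})" using assms by simp
qed


lemma X_card: "finite S \<Longrightarrow> 0 \<notin> S \<Longrightarrow> Xs u v S = Xc u v (card S)"
proof (induction "card S" arbitrary: S rule: less_induct)
  case less
  have key: "Xs u v S' = (\<Sum>j\<le>card S - 1. of_nat (card S - 1 choose j) * (Xc u v j * Xc u v (card S - 1 - j)))"
    if S': "finite S'" "0 \<notin> S'" "card S' = card S" "card S \<ge> 2" for S'
  proof -
    note mf = min_facts[OF S'(1), unfolded S'(3), OF S'(4)]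
    define R where "R = S' - {Min S'}"
    have "Xs u v S' = (\<Sum>T\<in>Pow R. Xs u v T * Xs u v (R - T))"
      unfolding R_def by (rule X_rec[OF S'(1) mf(1,2,3)])
    also have "\<dots> = (\<Sum>T\<in>Pow R. Xc u v (card T) * Xc u v (card (R - T)))"
    proof (intro sum.cong refl)
      fix T assume T: "T \<in> Pow R"
      have fR: "finite R" "card R < card S" using mf S' by (auto simp: R_def)
      have fT: "finite T" "card T < card S" using T fR by (auto intro: finite_subset le_less_trans[OF card_mono])
      have fT2: "finite (R - T)" "card (R - T) < card S" using fR by (auto intro: le_less_trans[OF card_mono])
      have z: "0 \<notin> T" "0 \<notin> R - T" using T S'(2) by (auto simp: R_def)
      show "Xs u v T * Xs u v (R - T) = Xc u v (card T) * Xc u v (card (R - T))"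
        using less(1)[OF fT(2) fT(1) z(1)] less(1)[OF fT2(2) fT2(1) z(2)] by simp
    qed
    also have "\<dots> = (\<Sum>j\<le>card R. of_nat (card R choose j) * (Xc u v j * Xc u v (card R - j)))"
      by (rule sum_Pow_card2) (use mf in \<open>simp add: R_def\<close>)
    finally show ?thesis using mf by (simp add: R_def)
  qed
  show ?case
  proof (cases "card S \<ge> 2")
    case True
    have "Xs u v S = (\<Sum>j\<le>card S - 1. of_nat (card S - 1 choose j) * (Xc u v j * Xc u v (card S - 1 - j)))"
      by (rule key) (use less True in auto)
    also have "\<dots> = Xs u v {1..card S}"
      by (rule key[symmetric]) (use True in auto)
    finally show ?thesis by (simp add: Xc_def)
  next
    case False
    then have "card S = 0 \<or> card S = 1" by auto
    then show ?thesis
    proof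
      assume "card S = 0" then have "S = {}" using less by simp
      then show ?thesis by (simp add: Xc_def)
    next
      assume "card S = 1"
      then obtain a where a: "S = {a}" by (auto simp: card_Suc_eq)
      then have "a > 0" using less by auto
      then show ?thesis using a by (simp add: Xc_def X_single)
    qed
  qed
qed

lemma A_card: "finite S \<Longrightarrow> 0 \<notin> S \<Longrightarrow> As u v \<beta> S = Ac u v \<beta> (card S)"
proof (induction "card S" arbitrary: S rule: less_induct)
  case less
  have key: "As u v \<beta> S' = \<beta> * (\<Sum>j\<le>card S - 1. of_nat (card S - 1 choose j) * (Xc u v j * Ac u v \<beta> (card S - 1 - j)))"
    if S': "finite S'" "0 \<notin> S'" "card S' = card S" "card S \<ge> 1" for S'
  proof -
    have ne: "S' \<noteq> {}" using S' by auto
    have m: "Min S' \<in> S'" "\<forall>z\<in>S'. Min S' \<le> z" using S'(1) ne by auto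
    have cR: "card (S' - {Min S'}) = card S - 1" using m S' by simp
    define R where "R = S' - {Min S'}"
    have "As u v \<beta> S' = \<beta> * (\<Sum>T\<in>Pow R. Xs u v T * As u v \<beta> (R - T))"
      unfolding R_def by (rule A_rec[OF S'(1) m])
    also have "(\<Sum>T\<in>Pow R. Xs u v T * As u v \<beta> (R - T)) = (\<Sum>T\<in>Pow R. Xc u v (card T) * Ac u v \<beta> (card (R - T)))"
    proof (intro sum.cong refl)
      fix T assume T: "T \<in> Pow R"
      have fR: "finite R" "card R < card S" using cR S' by (auto simp: R_def)
      have fT: "finite T" using T fR by (auto intro: finite_subset)
      have fT2: "finite (R - T)" "card (R - T) < card S" using fR by (auto intro: le_less_trans[OF card_mono])
      have z: "0 \<notin> T" "0 \<notin> R - T" using T S'(2) by (auto simp: R_def)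
      show "Xs u v T * As u v \<beta> (R - T) = Xc u v (card T) * Ac u v \<beta> (card (R - T))"
        using X_card[OF fT z(1)] less(1)[OF fT2(2) fT2(1) z(2)] by simp
    qed
    also have "\<dots> = (\<Sum>j\<le>card R. of_nat (card R choose j) * (Xc u v j * Ac u v \<beta> (card R - j)))"
      by (rule sum_Pow_card2) (use S' in \<open>simp add: R_def\<close>)
    finally show ?thesis using cR by (simp add: R_def)
  qed
  show ?case
  proof (cases "card S \<ge> 1")
    case True
    have "As u v \<beta> S = \<beta> * (\<Sum>j\<le>card S - 1. of_nat (card S - 1 choose j) * (Xc u v j * Ac u v \<beta> (card S - 1 - j)))"
      by (rule key) (use less True in auto)
    also have "\<dots> = As u v \<beta> {1..card S}"
      by (rule key[symmetric]) (use True in auto)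
    finally show ?thesis by (simp add: Ac_def)
  next
    case False
    then have "card S = 0" by simp
    then have "S = {}" using less by simp
    then show ?thesis by (simp add: Ac_def)
  qed
qed

lemma Xc_0: "Xc u v 0 = v" by (simp add: Xc_def X_empty)
lemma Xc_1: "Xc u v (Suc 0) = u ^ 2" by (simp add: Xc_def X_single)
lemma Ac_0: "Ac u v \<beta> 0 = 1" by (simp add: Ac_def A_empty)

lemma Xc_rec: "k \<ge> 1 \<Longrightarrow> Xc u v (Suc k) = (\<Sum>j\<le>k. of_nat (k choose j) * (Xc u v j * Xc u v (k - j)))"
proof -
  assume k: "k \<ge> 1"
  define S where "S = {1..Suc k}"
  have mf: "S - {1} = {2..Suc k}" by (auto simp: S_def)
  have cS: "card (S - {1}) = k" "finite (S - {1})" unfolding mf by simp_all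
  have "Xs u v S = (\<Sum>T\<in>Pow (S - {1}). Xs u v T * Xs u v (S - {1} - T))"
  proof -
    have ne: "S - {1} \<noteq> {}" using k unfolding mf by simp
    show ?thesis by (rule X_rec[OF _ _ _ ne]) (auto simp: S_def)
  qed
  also have "\<dots> = (\<Sum>T\<in>Pow (S - {1}). Xc u v (card T) * Xc u v (card (S - {1} - T)))"
  proof (rule sum.cong[OF refl])
    fix T assume T: "T \<in> Pow (S - {1})"
    then have "finite T" "0 \<notin> T" "finite (S - {1} - T)" "0 \<notin> S - {1} - T"
      using cS(2) by (auto simp: S_def intro: finite_subset)
    then show "Xs u v T * Xs u v (S - {1} - T) = Xc u v (card T) * Xc u v (card (S - {1} - T))"
      by (simp add: X_card)
  qed
  also have "\<dots> = (\<Sum>j\<le>k. of_nat (k choose j) * (Xc u v j * Xc u v (k - j)))"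
    by (subst sum_Pow_card2[OF cS(2)]) (simp only: cS(1))
  finally show ?thesis by (simp add: Xc_def S_def)
qed

lemma Ac_rec: "Ac u v \<beta> (Suc n) = \<beta> * (\<Sum>j\<le>n. of_nat (n choose j) * (Xc u v j * Ac u v \<beta> (n - j)))"
proof -
  define S where "S = {1..Suc n}"
  have mf: "S - {1} = {2..Suc n}" by (auto simp: S_def)
  have cS: "card (S - {1}) = n" "finite (S - {1})" unfolding mf by simp_all
  have "As u v \<beta> S = \<beta> * (\<Sum>T\<in>Pow (S - {1}). Xs u v T * As u v \<beta> (S - {1} - T))"
    by (rule A_rec) (auto simp: S_def)
  also have "(\<Sum>T\<in>Pow (S - {1}). Xs u v T * As u v \<beta> (S - {1} - T))
      = (\<Sum>T\<in>Pow (S - {1}). Xc u v (card T) * Ac u v \<beta> (card (S - {1} - T)))"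
  proof (rule sum.cong[OF refl])
    fix T assume T: "T \<in> Pow (S - {1})"
    then have "finite T" "0 \<notin> T" "finite (S - {1} - T)" "0 \<notin> S - {1} - T"
      using cS(2) by (auto simp: S_def intro: finite_subset)
    then show "Xs u v T * As u v \<beta> (S - {1} - T) = Xc u v (card T) * Ac u v \<beta> (card (S - {1} - T))"
      by (simp add: X_card A_card)
  qed
  also have "\<dots> = (\<Sum>j\<le>n. of_nat (n choose j) * (Xc u v j * Ac u v \<beta> (n - j)))"
    by (subst sum_Pow_card2[OF cS(2)]) (simp only: cS(1))
  finally show ?thesis by (simp add: Ac_def S_def)
qed





lemma Xf_ode:
  "fps_deriv (Abs_fps (\<lambda>k. Xc u v k / fact k)) =
     Abs_fps (\<lambda>k. Xc u v k / fact k) * Abs_fps (\<lambda>k. Xc u v k / fact k) - fps_const (v\<^sup>2 - u\<^sup>2)"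
proof (rule fps_ext)
  fix n
  define X where "X = Abs_fps (\<lambda>k. Xc u v k / fact k)"
  have lhs: "fps_deriv X $ n = Xc u v (Suc n) / fact n"
    by (simp add: X_def fact_Suc del: of_nat_Suc)
  have prod: "(X * X) $ n = (\<Sum>i\<le>n. of_nat (n choose i) * (Xc u v i * Xc u v (n - i))) / fact n"
  proof -
    have "(X * X) $ n = (\<Sum>i=0..n. Xc u v i / fact i * (Xc u v (n - i) / fact (n - i)))"
      by (simp add: X_def fps_mult_nth)
    also have "\<dots> = (\<Sum>i\<le>n. of_nat (n choose i) * (Xc u v i * Xc u v (n - i)) / fact n)"
      by (intro sum.cong) (auto simp: binomial_fact atLeast0AtMost)
    finally show ?thesis by (simp add: sum_divide_distrib)
  qed
  show "fps_deriv X $ n = (X * X - fps_const (v\<^sup>2 - u\<^sup>2)) $ n"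
  proof (cases n)
    case 0
    then show ?thesis using lhs by (simp add: X_def fps_mult_nth Xc_0 Xc_1 power2_eq_square)
  next
    case (Suc k)
    then show ?thesis using lhs prod Xc_rec[of n u v] by simp
  qed
qed

lemma Af_ode:
  "fps_deriv (Abs_fps (\<lambda>k. Ac u v \<beta> k / fact k)) =
     fps_const \<beta> * Abs_fps (\<lambda>k. Xc u v k / fact k) * Abs_fps (\<lambda>k. Ac u v \<beta> k / fact k)"
proof (rule fps_ext)
  fix n
  define X where "X = Abs_fps (\<lambda>k. Xc u v k / fact k)"
  define A where "A = Abs_fps (\<lambda>k. Ac u v \<beta> k / fact k)"
  have lhs: "fps_deriv A $ n = Ac u v \<beta> (Suc n) / fact n"
    by (simp add: A_def fact_Suc del: of_nat_Suc)
  have prod: "(X * A) $ n = (\<Sum>i\<le>n. of_nat (n choose i) * (Xc u v i * Ac u v \<beta> (n - i))) / fact n"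
  proof -
    have "(X * A) $ n = (\<Sum>i=0..n. Xc u v i / fact i * (Ac u v \<beta> (n - i) / fact (n - i)))"
      by (simp add: X_def A_def fps_mult_nth)
    also have "\<dots> = (\<Sum>i\<le>n. of_nat (n choose i) * (Xc u v i * Ac u v \<beta> (n - i)) / fact n)"
      by (intro sum.cong) (auto simp: binomial_fact atLeast0AtMost)
    finally show ?thesis by (simp add: sum_divide_distrib)
  qed
  have "(fps_const \<beta> * X * A) $ n = \<beta> * (X * A) $ n" by (simp only: mult.assoc fps_mult_left_const_nth)
  then show "fps_deriv A $ n = (fps_const \<beta> * X * A) $ n"
    using lhs prod Ac_rec[of u v \<beta> n] by simp
qed

theorem theorem4p2:
  fixes u v \<beta> :: real
  shows "Abs_fps (\<lambda>n. (\<Sum>\<sigma>\<in>permutations_of_set {1..n}.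
             u ^ (2 * peakL \<sigma>) * v ^ (n - 2 * peakL \<sigma>) * \<beta> ^ RLmin \<sigma>) / fact n)
       = fps_pow_real
           (inverse (cosh_fps (v\<^sup>2 - u\<^sup>2) - fps_const v * sinhw_fps (v\<^sup>2 - u\<^sup>2)))
           \<beta>"
proof -
  have "Abs_fps (\<lambda>n. (\<Sum>\<sigma>\<in>permutations_of_set {1..n}.
             u ^ (2 * peakL \<sigma>) * v ^ (n - 2 * peakL \<sigma>) * \<beta> ^ RLmin \<sigma>) / fact n)
      = Abs_fps (\<lambda>n. Ac u v \<beta> n / fact n)"
  proof (rule fps_ext)
    fix n
    have "(\<Sum>\<sigma>\<in>permutations_of_set {1..n}. u ^ (2 * peakL \<sigma>) * v ^ (n - 2 * peakL \<sigma>) * \<beta> ^ RLmin \<sigma>)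
        = (\<Sum>\<sigma>\<in>permutations_of_set {1..n}. aw u v \<beta> \<sigma>)"
    proof (rule sum.cong[OF refl])
      fix \<sigma> assume "\<sigma> \<in> permutations_of_set {1..n}"
      then have "length \<sigma> = n" by (simp add: length_finite_permutations_of_set)
      then show "u ^ (2 * peakL \<sigma>) * v ^ (n - 2 * peakL \<sigma>) * \<beta> ^ RLmin \<sigma> = aw u v \<beta> \<sigma>"
        by (simp add: aw_def peakL_eq RLmin_eq)
    qed
    then show "Abs_fps (\<lambda>n. (\<Sum>\<sigma>\<in>permutations_of_set {1..n}.
             u ^ (2 * peakL \<sigma>) * v ^ (n - 2 * peakL \<sigma>) * \<beta> ^ RLmin \<sigma>) / fact n) $ n
        = Abs_fps (\<lambda>n. Ac u v \<beta> n / fact n) $ n"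
      by (simp add: Ac_def As_def)
  qed
  also have "\<dots> = fps_pow_real
           (inverse (cosh_fps (v\<^sup>2 - u\<^sup>2) - fps_const v * sinhw_fps (v\<^sup>2 - u\<^sup>2))) \<beta>"
    by (rule main_fps[OF Xf_ode _ Af_ode]) (simp_all add: Xc_0 Ac_0)
  finally show ?thesis .
qed


end
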